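(* Let $\lambda>0$ be such that $\theta([\lambda,\lambda(1+\frac{1}{n-1})])>0$, and let $\nu$ be the uniform probability measure on $[0,\lambda]^{n-1}$. Then the gap process is $\nu$-irreducible: for every $\mathbf{y}\in\mathbb{R}_+^{n-1}$ and every Borel $B\subseteq\mathbb{R}_+^{n-1}$ with $\nu(B)>0$, $$\mathbb{E}_{\mathbf{y}}\int_0^\infty\mathbf{1}_{\{\mathbf{Y}(t)\in B\}}\,dt>0.$$
   Context: Fix $n\ge 2$ and a probability law $\theta$ on $(0,\infty)$ with mean $1$. The $n$-particle Stochastic Follow-the-Leader system $\mathbf{X}=(X_1,\dots,X_n)$ on $\mathbb{R}$, $X_n<\dots<X_1$, evolves as a pure jump Markov process: the leader $X_1$ jumps forward at rate $1$ with i.i.d. jump sizes of law $\theta$; for $i\ge2$, $X_i$ jumps at rate $X_{i-1}-X_i$ to a uniform location in $(X_i,X_{i-1})$. The gap process $\mathbf{Y}$, $Y_i=X_i-X_{i+1}$, is Markov on $\mathbb{R}_+^{n-1}$; $\mathbb{E}_{\mathbf{y}}$ denotes expectation when $\mathbf{Y}(0)=\mathbf{y}$. *)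

theory Defs
  imports "HOL-Probability.Probability"
begin

text \<open>Stochastic Follow-the-Leader system with n particles, positions
  x 1 > x 2 > ... > x n (indices 1..n; other indices irrelevant).
  The pure jump Markov process is realised through its standard
  random-mapping representation: the k-th innovation is a quadruple
  (e, u, v, j) with e ~ Exp(1) (holding time before scaling by the total
  rate), u ~ Unif[0,1] (selects which particle jumps, with probability
  proportional to its rate), v ~ Unif[0,1] (uniform target location in
  the gap ahead) and j ~ theta (leader jump size), all independent and
  i.i.d. over k.\<close>

definition sfl_rate :: "nat \<Rightarrow> (nat \<Rightarrow> real) \<Rightarrow> real" where
  "sfl_rate n x = 1 + (\<Sum>i\<in>{2..n}. x (i - 1) - x i)"

text \<open>cumulative rate of particles 1..i (leader has rate 1, particle k \<ge> 2 has
  rate x (k-1) - x k)\<close>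
definition sfl_cum :: "(nat \<Rightarrow> real) \<Rightarrow> nat \<Rightarrow> real" where
  "sfl_cum x i = 1 + (\<Sum>k\<in>{2..i}. x (k - 1) - x k)"

definition sfl_pick :: "nat \<Rightarrow> (nat \<Rightarrow> real) \<Rightarrow> real \<Rightarrow> nat" where
  "sfl_pick n x u =
     (if \<exists>i\<in>{1..n}. u * sfl_rate n x < sfl_cum x i
      then (LEAST i. 1 \<le> i \<and> u * sfl_rate n x < sfl_cum x i) else 1)"

definition sfl_jump :: "nat \<Rightarrow> (nat \<Rightarrow> real) \<Rightarrow> real \<times> real \<times> real \<Rightarrow> nat \<Rightarrow> real" where
  "sfl_jump n x w =
     (case w of (u, v, j) \<Rightarrow>
       (let i = sfl_pick n x u in
        if i = 1 then x(1 := x 1 + j)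
        else x(i := x i + v * (x (i - 1) - x i))))"

type_synonym sfl_innov = "real \<times> real \<times> real \<times> real"

fun sfl_chain :: "nat \<Rightarrow> (nat \<Rightarrow> real) \<Rightarrow> (nat \<Rightarrow> sfl_innov) \<Rightarrow> nat \<Rightarrow> (nat \<Rightarrow> real)" where
  "sfl_chain n x0 \<omega> 0 = x0"
| "sfl_chain n x0 \<omega> (Suc k) = sfl_jump n (sfl_chain n x0 \<omega> k) (snd (\<omega> k))"

fun sfl_time :: "nat \<Rightarrow> (nat \<Rightarrow> real) \<Rightarrow> (nat \<Rightarrow> sfl_innov) \<Rightarrow> nat \<Rightarrow> real" where
  "sfl_time n x0 \<omega> 0 = 0"
| "sfl_time n x0 \<omega> (Suc k) =
     sfl_time n x0 \<omega> k + fst (\<omega> k) / sfl_rate n (sfl_chain n x0 \<omega> k)"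

definition sfl_gaps :: "nat \<Rightarrow> (nat \<Rightarrow> real) \<Rightarrow> nat \<Rightarrow> real" where
  "sfl_gaps n x = (\<lambda>i\<in>{1..<n}. x i - x (Suc i))"

definition sfl_init :: "(nat \<Rightarrow> real) \<Rightarrow> nat \<Rightarrow> real" where
  "sfl_init y i = - (\<Sum>k\<in>{1..<i}. y k)"

text \<open>the gap process Y(t) started from gaps y (None after a possible explosion
  time, i.e. the minimal process)\<close>
definition sfl_Y :: "nat \<Rightarrow> (nat \<Rightarrow> real) \<Rightarrow> (nat \<Rightarrow> sfl_innov) \<Rightarrow> real \<Rightarrow> (nat \<Rightarrow> real) option" where
  "sfl_Y n y \<omega> t =
     (let T = sfl_time n (sfl_init y) \<omega> in
      if \<exists>k. T k \<le> t \<and> t < T (Suc k)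
      then Some (sfl_gaps n (sfl_chain n (sfl_init y) \<omega> (LEAST k. T k \<le> t \<and> t < T (Suc k))))
      else None)"

definition sfl_innov_measure :: "real measure \<Rightarrow> sfl_innov measure" where
  "sfl_innov_measure \<theta> =
     density lborel (exponential_density 1) \<Otimes>\<^sub>M
       (uniform_measure lborel {0..1} \<Otimes>\<^sub>M (uniform_measure lborel {0..1} \<Otimes>\<^sub>M \<theta>))"

definition sfl_paths :: "real measure \<Rightarrow> (nat \<Rightarrow> sfl_innov) measure" where
  "sfl_paths \<theta> = PiM UNIV (\<lambda>_. sfl_innov_measure \<theta>)"

definition sfl_occupation :: "real measure \<Rightarrow> nat \<Rightarrow> (nat \<Rightarrow> real) \<Rightarrow> (nat \<Rightarrow> real) set \<Rightarrow> ennreal" where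
  "sfl_occupation \<theta> n y B =
     (\<integral>\<^sup>+ \<omega>. (\<integral>\<^sup>+ t. indicator {t. t \<ge> 0 \<and> (\<exists>z\<in>B. sfl_Y n y \<omega> t = Some z)} t \<partial>lborel)
        \<partial>sfl_paths \<theta>)"

definition sfl_space :: "nat \<Rightarrow> (nat \<Rightarrow> real) measure" where
  "sfl_space n = PiM {1..<n} (\<lambda>_. borel)"

definition sfl_nu :: "nat \<Rightarrow> real \<Rightarrow> (nat \<Rightarrow> real) measure" where
  "sfl_nu n lam = uniform_measure (PiM {1..<n} (\<lambda>_. lborel)) (PiE {1..<n} (\<lambda>_. {0..lam}))"

end

theory Submission
  imports Defs
begin


lemma sum_tele: "(n::nat) \<ge> 1 \<Longrightarrow> (\<Sum>i\<in>{2..n}. x (i - 1) - x i) = (x 1 - x n :: real)"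
proof (induction n rule: nat_induct_at_least)
  case base then show ?case by simp
next
  case (Suc n)
  have "{2..Suc n} = insert (Suc n) {2..n}" using Suc by auto
  then show ?case using Suc by simp
qed

lemma rate_eq: "n \<ge> 1 \<Longrightarrow> sfl_rate n x = 1 + x 1 - x n"
  unfolding sfl_rate_def using sum_tele[of n x] by simp

lemma cum_eq: "i \<ge> 1 \<Longrightarrow> sfl_cum x i = 1 + x 1 - x i"
  unfolding sfl_cum_def using sum_tele[of i x] by simp

definition ordd :: "nat \<Rightarrow> (nat \<Rightarrow> real) \<Rightarrow> bool" where
  "ordd n x = (\<forall>i\<in>{2..n}. x i \<le> x (i - 1))"

lemma ordd_mono: assumes "ordd n x" "1 \<le> i" "i \<le> j" "j \<le> n" shows "x j \<le> x i"
  using assms(3,4)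
proof (induction j rule: dec_induct)
  case base then show ?case by simp
next
  case (step j)
  have "x (Suc j) \<le> x j" using assms(1,2) step unfolding ordd_def
    by (metis Suc_le_mono atLeastAtMost_iff diff_Suc_1 le_trans one_le_numeral Suc_1 )
  then show ?case using step by simp
qed

definition win :: "nat \<Rightarrow> nat \<Rightarrow> (nat \<Rightarrow> real) \<Rightarrow> real \<Rightarrow> bool" where
  "win n p x u = ((if p = 1 then u * sfl_rate n x < 1 else sfl_cum x (p - 1) \<le> u * sfl_rate n x)
      \<and> u * sfl_rate n x < sfl_cum x p)"

lemma pick_eq:
  assumes "ordd n x" "1 \<le> p" "p \<le> n" "win n p x u"
  shows "sfl_pick n x u = p"
proof -
  have ex: "\<exists>i\<in>{1..n}. u * sfl_rate n x < sfl_cum x i" using assms unfolding win_def by auto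
  have "(LEAST i. 1 \<le> i \<and> u * sfl_rate n x < sfl_cum x i) = p"
  proof (rule Least_equality)
    show "1 \<le> p \<and> u * sfl_rate n x < sfl_cum x p" using assms unfolding win_def by auto
  next
    fix i assume i: "1 \<le> i \<and> u * sfl_rate n x < sfl_cum x i"
    show "p \<le> i"
    proof (rule ccontr)
      assume "\<not> p \<le> i"
      then have "i \<le> p - 1" "p \<noteq> 1" using i by auto
      then have "x (p - 1) \<le> x i" using ordd_mono[OF assms(1)] i assms by auto
      then have "sfl_cum x i \<le> sfl_cum x (p - 1)" using cum_eq i \<open>p \<noteq> 1\<close> assms(2) by simp
      then show False using i assms(4) \<open>p \<noteq> 1\<close> unfolding win_def by auto
    qed
  qed
  then show ?thesis using ex unfolding sfl_pick_def by simp
qed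



fun psi :: "(nat \<Rightarrow> 'x \<Rightarrow> 'w \<Rightarrow> 'x) \<Rightarrow> 'x \<Rightarrow> (nat \<Rightarrow> 'w) \<Rightarrow> nat \<Rightarrow> 'x" where
  "psi st x0 om 0 = x0"
| "psi st x0 om (Suc k) = st k (psi st x0 om k) (om k)"

fun WW :: "(nat \<Rightarrow> 'x \<Rightarrow> 'w \<Rightarrow> 'x) \<Rightarrow> 'w measure \<Rightarrow> ('x \<Rightarrow> ennreal) \<Rightarrow> nat \<Rightarrow> nat \<Rightarrow> 'x \<Rightarrow> ennreal" where
  "WW st M f 0 k x = f x"
| "WW st M f (Suc r) k x = (\<integral>\<^sup>+ w. WW st M f r (Suc k) (st k x w) \<partial>M)"

lemma psi_cong: "(\<And>j. j < k \<Longrightarrow> om j = om' j) \<Longrightarrow> psi st x0 om k = psi st x0 om' k"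
  by (induction k) auto

lemma WW_Suc': "WW st M f (Suc r) k x = WW st M (\<lambda>y. \<integral>\<^sup>+ w. f (st (k + r) y w) \<partial>M) r k x"
proof (induction r arbitrary: k x)
  case 0 then show ?case by simp
next
  case (Suc r)
  show ?case
    by (subst WW.simps, subst Suc, simp add: add_Suc_right)
qed

lemma WW_meas:
  assumes M: "prob_space M" and st: "\<And>k. (\<lambda>(x, w). st k x w) \<in> measurable (S \<Otimes>\<^sub>M M) S"
    and f: "f \<in> borel_measurable S"
  shows "WW st M f r k \<in> borel_measurable S"
proof (induction r arbitrary: k)
  case 0 then show ?case using f by simp
next
  case (Suc r)
  interpret prob_space M by (rule M)
  have "(\<lambda>(x, w). WW st M f r (Suc k) (st k x w)) \<in> borel_measurable (S \<Otimes>\<^sub>M M)"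
    using measurable_comp[OF st Suc] by (simp add: comp_def case_prod_beta')
  then show ?case by (simp add: borel_measurable_nn_integral)
qed

lemma psi_meas:
  assumes st: "\<And>k. (\<lambda>(x, w). st k x w) \<in> measurable (S \<Otimes>\<^sub>M M) S" and x0: "x0 \<in> space S"
  shows "k \<le> N \<Longrightarrow> (\<lambda>om. psi st x0 om k) \<in> measurable (PiM {..<N} (\<lambda>_. M)) S"
proof (induction k)
  case 0 then show ?case using x0 by simp
next
  case (Suc k)
  have a: "(\<lambda>om. (psi st x0 om k, om k)) \<in> measurable (PiM {..<N} (\<lambda>_. M)) (S \<Otimes>\<^sub>M M)"
    using Suc by (intro measurable_Pair) auto
  show ?case using measurable_comp[OF a st] by (simp add: comp_def)
qed

lemma markov:
  assumes M: "prob_space M" and st: "\<And>k. (\<lambda>(x, w). st k x w) \<in> measurable (S \<Otimes>\<^sub>M M) S"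
    and x0: "x0 \<in> space S"
  shows "f \<in> borel_measurable S \<Longrightarrow>
    (\<integral>\<^sup>+ om. f (psi st x0 om N) \<partial>PiM {..<N} (\<lambda>_. M)) = WW st M f N 0 x0"
proof (induction N arbitrary: f)
  case 0
  have "(\<integral>\<^sup>+ om. f (psi st x0 om 0) \<partial>PiM {..<0} (\<lambda>_. M)) = f x0"
    by (simp add: PiM_empty nn_integral_count_space_finite)
  then show ?case by simp
next
  case (Suc N)
  interpret prob_space M by (rule M)
  interpret P: product_prob_space "\<lambda>_. M" "UNIV :: nat set" by unfold_locales
  have fm[measurable]: "f \<in> borel_measurable S" by (rule Suc.prems)
  have pm: "(\<lambda>om. psi st x0 om (Suc N)) \<in> measurable (PiM {..<Suc N} (\<lambda>_. M)) S"
    by (rule psi_meas[OF st x0]) simp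
  have eq: "{..<Suc N} = insert N {..<N}" by auto
  have "(\<integral>\<^sup>+ om. f (psi st x0 om (Suc N)) \<partial>PiM {..<Suc N} (\<lambda>_. M))
      = (\<integral>\<^sup>+ om. (\<integral>\<^sup>+ w. f (psi st x0 (om(N := w)) (Suc N)) \<partial>M) \<partial>PiM {..<N} (\<lambda>_. M))"
    unfolding eq
    by (rule P.product_nn_integral_insert) (use measurable_comp[OF pm fm] eq in \<open>auto simp: comp_def\<close>)
  also have "\<dots> = (\<integral>\<^sup>+ om. (\<lambda>y. \<integral>\<^sup>+ w. f (st N y w) \<partial>M) (psi st x0 om N) \<partial>PiM {..<N} (\<lambda>_. M))"
  proof (rule nn_integral_cong)
    fix om show "(\<integral>\<^sup>+ w. f (psi st x0 (om(N := w)) (Suc N)) \<partial>M) = (\<lambda>y. \<integral>\<^sup>+ w. f (st N y w) \<partial>M) (psi st x0 om N)"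
      by (simp add: psi_cong[of N "om(N := _)" om])
  qed
  also have "\<dots> = WW st M (\<lambda>y. \<integral>\<^sup>+ w. f (st N y w) \<partial>M) N 0 x0"
  proof (rule Suc.IH)
    have "(\<lambda>(y, w). f (st N y w)) \<in> borel_measurable (S \<Otimes>\<^sub>M M)"
      using measurable_comp[OF st fm] by (simp add: comp_def case_prod_beta')
    then show "(\<lambda>y. \<integral>\<^sup>+ w. f (st N y w) \<partial>M) \<in> borel_measurable S"
      by (simp add: borel_measurable_nn_integral)
  qed
  also have "\<dots> = WW st M f (Suc N) 0 x0" using WW_Suc'[of st M f N 0 x0] by simp
  finally show ?case .
qed



definition mv :: "nat \<Rightarrow> (nat \<Rightarrow> real) \<Rightarrow> real \<Rightarrow> real \<Rightarrow> nat \<Rightarrow> real" where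
  "mv p x v j = (if p = 1 then x(1 := x 1 + j) else x(p := x p + v * (x (p - 1) - x p)))"

definition pl :: "nat \<Rightarrow> nat \<Rightarrow> nat" where
  "pl n k = (if k < n - 1 then 1 else k + 3 - n)"

definition stp :: "nat \<Rightarrow> nat \<Rightarrow> (nat \<Rightarrow> real) \<Rightarrow> sfl_innov \<Rightarrow> nat \<Rightarrow> real" where
  "stp n k x w = (case w of (e, u, v, j) \<Rightarrow>
     if k < 2 * n - 2 then
       (if x 0 = 0 \<and> ordd n x \<and> 0 \<le> e \<and> win n (pl n k) x u then mv (pl n k) x v j else x(0 := 1))
     else (if x 0 = 0 \<and> ordd n x \<and> 1 \<le> e then x else x(0 := 1)))"

abbreviation SS :: "(nat \<Rightarrow> real) measure" where
  "SS \<equiv> PiM UNIV (\<lambda>_. borel)"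

abbreviation B4 :: "sfl_innov measure" where
  "B4 \<equiv> borel \<Otimes>\<^sub>M (borel \<Otimes>\<^sub>M (borel \<Otimes>\<^sub>M borel))"

lemma meas_comp[measurable]: "(\<lambda>x. x i) \<in> borel_measurable SS"
  by (rule measurable_component_singleton) simp

lemma mv_apply: "mv p x v j i = (if p = 1 then (if i = 1 then x 1 + j else x i)
   else if i = p then x p + v * (x (p - 1) - x p) else x i)"
  unfolding mv_def by auto

lemma meas_rate[measurable]: "(\<lambda>x. sfl_rate n x) \<in> borel_measurable SS"
  unfolding sfl_rate_def by measurable

lemma meas_cum[measurable]: "(\<lambda>x. sfl_cum x p) \<in> borel_measurable SS"
  unfolding sfl_cum_def by measurable

lemma pred_le_comp: "Measurable.pred SS (\<lambda>x. x i \<le> x j)"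
proof -
  have [measurable]: "(\<lambda>x. x i) \<in> borel_measurable SS" "(\<lambda>x. x j) \<in> borel_measurable SS" by (rule meas_comp)+
  show ?thesis unfolding pred_def by (rule borel_measurable_le) (rule meas_comp)+
qed

lemma meas_ordd[measurable]: "Measurable.pred SS (ordd n)"
  unfolding ordd_def by (intro pred_intros_finite pred_le_comp) auto

lemma pred_win[measurable]: "Measurable.pred (SS \<Otimes>\<^sub>M B4) (\<lambda>(x, w). win n p x (fst (snd w)))"
  unfolding win_def by measurable

lemma meas_mv_i: "(\<lambda>(x, w). mv p x (fst (snd (snd w))) (snd (snd (snd w))) i) \<in> borel_measurable (SS \<Otimes>\<^sub>M B4)"
  unfolding mv_apply by measurable

lemma stp_apply: "stp n k x w i = (if k < 2 * n - 2 then
       (if x 0 = 0 \<and> ordd n x \<and> 0 \<le> fst w \<and> win n (pl n k) x (fst (snd w))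
        then mv (pl n k) x (fst (snd (snd w))) (snd (snd (snd w))) i else (if i = 0 then 1 else x i))
     else (if x 0 = 0 \<and> ordd n x \<and> 1 \<le> fst w then x i else (if i = 0 then 1 else x i)))"
  unfolding stp_def by (auto split: prod.splits)

lemma pred_ordd2[measurable]: "Measurable.pred (SS \<Otimes>\<^sub>M B4) (\<lambda>xw. ordd n (fst xw))"
  by measurable

lemma meas_mv_i'[measurable]: "(\<lambda>xw. mv p (fst xw) (fst (snd (snd (snd xw)))) (snd (snd (snd (snd xw)))) i) \<in> borel_measurable (SS \<Otimes>\<^sub>M B4)"
  using meas_mv_i[of p i] by (simp add: case_prod_beta')

lemma pred_win'[measurable]: "Measurable.pred (SS \<Otimes>\<^sub>M B4) (\<lambda>xw. win n p (fst xw) (fst (snd (snd xw))))"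
  using pred_win[of n p] by (simp add: case_prod_beta')

lemma stp_meas_B4: "(\<lambda>(x, w). stp n k x w) \<in> measurable (SS \<Otimes>\<^sub>M B4) SS"
proof (rule measurable_PiM_single')
  fix i :: nat
  show "(\<lambda>xw. (case xw of (x, w) \<Rightarrow> stp n k x w) i) \<in> borel_measurable (SS \<Otimes>\<^sub>M B4)"
    unfolding case_prod_beta' stp_apply by measurable
qed (auto simp: space_PiM)



abbreviation Me :: "real measure" where "Me \<equiv> density lborel (exponential_density 1)"
abbreviation Mu :: "real measure" where "Mu \<equiv> uniform_measure lborel {0..1}"

lemma prob_Me: "prob_space Me" by (rule prob_space_exponential_density) simp
lemma prob_Mu: "prob_space Mu" by (rule prob_space_uniform_measure) auto

lemma sets_innov: "sets \<theta> = sets borel \<Longrightarrow> sets (sfl_innov_measure \<theta>) = sets B4"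
  unfolding sfl_innov_measure_def
  by (intro sets_pair_measure_cong) auto

lemma prob_innov: "prob_space \<theta> \<Longrightarrow> prob_space (sfl_innov_measure \<theta>)"
  unfolding sfl_innov_measure_def
  by (intro prob_space_pair prob_Me prob_Mu)

lemma stp_meas: "sets \<theta> = sets borel \<Longrightarrow>
   (\<lambda>(x, w). stp n k x w) \<in> measurable (SS \<Otimes>\<^sub>M sfl_innov_measure \<theta>) SS"
  using stp_meas_B4[of n k]
  by (subst measurable_cong_sets[OF sets_pair_measure_cong[OF refl sets_innov]]) auto

lemma nn_int_pair_prod:
  assumes "sigma_finite_measure M2" "a \<in> borel_measurable M1" "g \<in> borel_measurable M2"
  shows "(\<integral>\<^sup>+ z. a (fst z) * g (snd z) \<partial>(M1 \<Otimes>\<^sub>M M2)) = (\<integral>\<^sup>+ x. a x \<partial>M1) * (\<integral>\<^sup>+ y. g y \<partial>M2)"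
proof -
  interpret M2: sigma_finite_measure M2 by fact
  have "(\<integral>\<^sup>+ z. a (fst z) * g (snd z) \<partial>(M1 \<Otimes>\<^sub>M M2)) = (\<integral>\<^sup>+ x. \<integral>\<^sup>+ y. a x * g y \<partial>M2 \<partial>M1)"
    using assms by (subst M2.nn_integral_fst[symmetric]) auto
  also have "\<dots> = (\<integral>\<^sup>+ x. a x * (\<integral>\<^sup>+ y. g y \<partial>M2) \<partial>M1)"
    using assms by (intro nn_integral_cong nn_integral_cmult) auto
  also have "\<dots> = (\<integral>\<^sup>+ x. a x \<partial>M1) * (\<integral>\<^sup>+ y. g y \<partial>M2)"
    using assms by (intro nn_integral_multc) auto
  finally show ?thesis .
qed

lemma int4:
  assumes th: "prob_space \<theta>" "sets \<theta> = sets borel"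
    and [measurable]: "a \<in> borel_measurable borel" "b \<in> borel_measurable borel"
      "c \<in> borel_measurable borel" "d \<in> borel_measurable borel"
  shows "(\<integral>\<^sup>+ w. a (fst w) * b (fst (snd w)) * c (fst (snd (snd w))) * d (snd (snd (snd w))) \<partial>sfl_innov_measure \<theta>)
     = (\<integral>\<^sup>+ x. a x \<partial>Me) * ((\<integral>\<^sup>+ x. b x \<partial>Mu) * ((\<integral>\<^sup>+ x. c x \<partial>Mu) * (\<integral>\<^sup>+ x. d x \<partial>\<theta>)))"
proof -
  have sf1: "sigma_finite_measure (Mu \<Otimes>\<^sub>M (Mu \<Otimes>\<^sub>M \<theta>))"
    by (intro prob_space_imp_sigma_finite prob_space_pair prob_Mu th)
  have sf2: "sigma_finite_measure (Mu \<Otimes>\<^sub>M \<theta>)"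
    by (intro prob_space_imp_sigma_finite prob_space_pair prob_Mu th)
  have sf3: "sigma_finite_measure \<theta>"
    by (intro prob_space_imp_sigma_finite th)
  have dm: "d \<in> borel_measurable \<theta>" using measurable_cong_sets[OF th(2) refl, of borel] \<open>d \<in> borel_measurable borel\<close> by metis
  have sMu: "sets Mu = sets borel" by simp
  have bm: "b \<in> borel_measurable Mu" "c \<in> borel_measurable Mu"
    using measurable_cong_sets[OF sMu refl, of borel] \<open>b \<in> borel_measurable borel\<close> \<open>c \<in> borel_measurable borel\<close> by metis+
  have m3: "(\<lambda>z. c (fst z) * d (snd z)) \<in> borel_measurable (Mu \<Otimes>\<^sub>M \<theta>)"
    using bm dm by measurable
  have m2: "(\<lambda>z. b (fst z) * (c (fst (snd z)) * d (snd (snd z)))) \<in> borel_measurable (Mu \<Otimes>\<^sub>M (Mu \<Otimes>\<^sub>M \<theta>))"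
    using bm dm by measurable
  have "(\<integral>\<^sup>+ w. a (fst w) * b (fst (snd w)) * c (fst (snd (snd w))) * d (snd (snd (snd w))) \<partial>sfl_innov_measure \<theta>)
     = (\<integral>\<^sup>+ w. a (fst w) * (\<lambda>z. b (fst z) * (c (fst (snd z)) * d (snd (snd z)))) (snd w) \<partial>sfl_innov_measure \<theta>)"
    by (simp add: mult.assoc)
  also have "\<dots> = (\<integral>\<^sup>+ x. a x \<partial>Me) * (\<integral>\<^sup>+ z. b (fst z) * (c (fst (snd z)) * d (snd (snd z))) \<partial>(Mu \<Otimes>\<^sub>M (Mu \<Otimes>\<^sub>M \<theta>)))"
    unfolding sfl_innov_measure_def by (rule nn_int_pair_prod[OF sf1 _ m2]) simp
  also have "(\<integral>\<^sup>+ z. b (fst z) * (c (fst (snd z)) * d (snd (snd z))) \<partial>(Mu \<Otimes>\<^sub>M (Mu \<Otimes>\<^sub>M \<theta>)))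
     = (\<integral>\<^sup>+ x. b x \<partial>Mu) * (\<integral>\<^sup>+ z. c (fst z) * d (snd z) \<partial>(Mu \<Otimes>\<^sub>M \<theta>))"
    by (rule nn_int_pair_prod[OF sf2 bm(1) m3])
  also have "(\<integral>\<^sup>+ z. c (fst z) * d (snd z) \<partial>(Mu \<Otimes>\<^sub>M \<theta>)) = (\<integral>\<^sup>+ x. c x \<partial>Mu) * (\<integral>\<^sup>+ x. d x \<partial>\<theta>)"
    by (rule nn_int_pair_prod[OF sf3 bm(2) dm])
  finally show ?thesis .
qed

lemma int_one_prob: "prob_space M \<Longrightarrow> (\<integral>\<^sup>+ x. 1 \<partial>M) = 1"
  by (simp add: prob_space.emeasure_space_1)

lemma Me_nonneg: "(\<integral>\<^sup>+ x. indicator {0..} x \<partial>Me) = 1"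
proof -
  have "(\<integral>\<^sup>+ x. indicator {0..} x \<partial>Me) = (\<integral>\<^sup>+ x. ennreal (exponential_density 1 x) * indicator {0..} x \<partial>lborel)"
    by (subst nn_integral_density) auto
  also have "\<dots> = (\<integral>\<^sup>+ x. ennreal (exponential_density 1 x) \<partial>lborel)"
    by (intro nn_integral_cong) (auto simp: exponential_density_def indicator_def)
  also have "\<dots> = (\<integral>\<^sup>+ x. 1 \<partial>Me)"
    by (subst nn_integral_density) auto
  also have "\<dots> = 1" using prob_Me by (rule int_one_prob)
  finally show ?thesis .
qed

lemma Me_ge1_pos: "(\<integral>\<^sup>+ x. indicator {1..} x \<partial>Me) > 0"
proof -
  have "(\<integral>\<^sup>+ x. indicator {1..} x \<partial>Me) = (\<integral>\<^sup>+ x. ennreal (exponential_density 1 x) * indicator {1..} x \<partial>lborel)"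
    by (subst nn_integral_density) auto
  also have "\<dots> \<ge> (\<integral>\<^sup>+ x. ennreal (exp (-2)) * indicator {1..2::real} x \<partial>lborel)"
    by (intro nn_integral_mono) (auto simp: exponential_density_def indicator_def)
  moreover have "(\<integral>\<^sup>+ x. ennreal (exp (-2)) * indicator {1..2::real} x \<partial>lborel) = ennreal (exp (-2))"
    by (subst nn_integral_cmult_indicator) auto
  ultimately show ?thesis by (metis ennreal_eq_0_iff exp_gt_zero not_le order.strict_trans1 not_gr_zero less_le)
qed

lemma Mu_Ico: "0 \<le> a \<Longrightarrow> a \<le> b \<Longrightarrow> b \<le> 1 \<Longrightarrow> (\<integral>\<^sup>+ x. indicator {a..<b} x \<partial>Mu) = ennreal (b - a)"
proof -
  assume "0 \<le> a" "a \<le> b" "b \<le> 1"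
  then have "{0..1} \<inter> {a..<b} = {a..<b}" by auto
  then show ?thesis using \<open>a \<le> b\<close> by (simp add: divide_ennreal_def)
qed



lemma gaps_meas[measurable]: "sfl_gaps n \<in> measurable SS (PiM {1..<n} (\<lambda>_. borel))"
  unfolding sfl_gaps_def by measurable

lemma restr_meas1:
  fixes n i :: nat
  shows "(\<lambda>s. \<lambda>j\<in>{1..<n}. if j < i then a j else s j) \<in> measurable (PiM {i..<n} (\<lambda>_. lborel)) (PiM {1..<n} (\<lambda>_. borel))"
proof (rule measurable_restrict)
  fix j assume j: "j \<in> {1..<n}"
  show "(\<lambda>s. if j < i then a j else s j) \<in> borel_measurable (PiM {i..<n} (\<lambda>_. lborel))"
  proof (cases "j < i")
    case True then show ?thesis by simp
  next
    case False
    then have "j \<in> {i..<n}" using j by auto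
    then have "(\<lambda>s. s j) \<in> measurable (PiM {i..<n} (\<lambda>_. lborel)) lborel" by (rule measurable_component_singleton)
    then show ?thesis using False by simp
  qed
qed

lemma restr_meas2:
  fixes n i :: nat
  shows "(\<lambda>(t, s). \<lambda>j\<in>{1..<n}. if j < i then a j else if j = i then t else s j)
     \<in> measurable (lborel \<Otimes>\<^sub>M PiM {Suc i..<n} (\<lambda>_. lborel)) (PiM {1..<n} (\<lambda>_. borel))"
proof -
  have "(\<lambda>ts. \<lambda>j\<in>{1..<n}. if j < i then a j else if j = i then fst ts else snd ts j)
     \<in> measurable (lborel \<Otimes>\<^sub>M PiM {Suc i..<n} (\<lambda>_. lborel)) (PiM {1..<n} (\<lambda>_. borel))"
  proof (rule measurable_restrict)
    fix j assume j: "j \<in> {1..<n}"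
    show "(\<lambda>ts. if j < i then a j else if j = i then fst ts else snd ts j) \<in> borel_measurable (lborel \<Otimes>\<^sub>M PiM {Suc i..<n} (\<lambda>_. lborel))"
    proof (cases "j < i")
      case True then show ?thesis by simp
    next
      case False
      show ?thesis
      proof (cases "j = i")
        case True then show ?thesis using False by simp
      next
        case F2: False
        then have "j \<in> {Suc i..<n}" using j False by auto
        then have "(\<lambda>s. s j) \<in> measurable (PiM {Suc i..<n} (\<lambda>_. lborel)) lborel" by (rule measurable_component_singleton)
        then have "(\<lambda>ts. snd ts j) \<in> measurable (lborel \<Otimes>\<^sub>M PiM {Suc i..<n} (\<lambda>_. lborel)) lborel"
          by (rule measurable_compose[OF measurable_snd])
        then show ?thesis using False F2 by simp
      qed
    qed
  qed
  then show ?thesis by (simp add: case_prod_beta')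
qed

lemma pow_pos_enn: "0 < (a::ennreal) \<Longrightarrow> 0 < a ^ k"
  by (induction k) (auto simp: ennreal_zero_less_mult_iff)

lemma product_sigma_finite_lborel: "product_sigma_finite (\<lambda>_::nat. lborel)"
  by (simp add: product_sigma_finite_def lborel.sigma_finite_measure_axioms)

lemma init_props:
  assumes n2: "n \<ge> 2" and y: "y \<in> PiE {1..<n} (\<lambda>_. {0..})"
  shows "sfl_init y 0 = 0" "ordd n (sfl_init y)" "0 \<le> sfl_init y 1 - sfl_init y 2"
proof -
  show "sfl_init y 0 = 0" unfolding sfl_init_def by simp
  have yq: "y q \<ge> 0" if "q \<in> {1..<n}" for q using y that by (auto simp: PiE_iff)
  have step: "sfl_init y (Suc q) = sfl_init y q - y q" if "q \<ge> 1" for q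
  proof -
    have "{1..<Suc q} = insert q {1..<q}" using that by auto
    then show ?thesis unfolding sfl_init_def by simp
  qed
  show "ordd n (sfl_init y)"
    unfolding ordd_def
  proof
    fix q assume q: "q \<in> {2..n}"
    then have "q = Suc (q - 1)" "q - 1 \<ge> 1" "q - 1 \<in> {1..<n}" by auto
    then have "sfl_init y q = sfl_init y (q - 1) - y (q - 1)" "0 \<le> y (q - 1)"
      using step[of "q - 1"] yq[of "q - 1"] by auto
    then show "sfl_init y q \<le> sfl_init y (q - 1)" by simp
  qed
  show "0 \<le> sfl_init y 1 - sfl_init y 2"
    using step[of 1] yq[of 1] n2 by (simp add: numeral_2_eq_2)
qed

context
  fixes n :: nat and \<theta> :: "real measure" and lam :: real and Bc :: "(nat \<Rightarrow> real) set"
    and R0 :: real and Rmax :: real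
  assumes n2: "n \<ge> 2" and thp: "prob_space \<theta>" and ths: "sets \<theta> = sets borel" and lp: "lam > 0"
    and Bcs: "Bc \<in> sets (PiM {1..<n} (\<lambda>_. borel))" and Bcc: "Bc \<subseteq> PiE {1..<n} (\<lambda>_. {0..lam})"
    and R0: "R0 \<ge> 1" and Rmax: "Rmax = R0 + 2 * lam * (real n - 1)"
begin

definition Lf :: "nat \<Rightarrow> (nat \<Rightarrow> real) \<Rightarrow> ennreal" where
  "Lf i x = (\<integral>\<^sup>+ s. indicator Bc (\<lambda>j\<in>{1..<n}. if j < i then x j - x (Suc j) else s j) \<partial>PiM {i..<n} (\<lambda>_. lborel))"

definition Gf :: "nat \<Rightarrow> (nat \<Rightarrow> real) \<Rightarrow> real \<Rightarrow> ennreal" where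
  "Gf i x t = (\<integral>\<^sup>+ s. indicator Bc (\<lambda>j\<in>{1..<n}. if j < i then x j - x (Suc j) else if j = i then t else s j)
      \<partial>PiM {Suc i..<n} (\<lambda>_. lborel))"

lemma Gf_meas: "Gf i x \<in> borel_measurable borel"
proof -
  interpret fps: finite_product_sigma_finite "\<lambda>_::nat. lborel" "{Suc i..<n}"
    by (simp add: finite_product_sigma_finite_def product_sigma_finite_lborel finite_product_sigma_finite_axioms_def)
  have "(\<lambda>(t, s). indicator Bc (\<lambda>j\<in>{1..<n}. if j < i then x j - x (Suc j) else if j = i then t else s j) :: ennreal)
     \<in> borel_measurable (lborel \<Otimes>\<^sub>M PiM {Suc i..<n} (\<lambda>_. lborel))"
    using measurable_compose[OF restr_meas2 borel_measurable_indicator[OF Bcs]]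
    by (simp add: case_prod_beta')
  then have "Gf i x \<in> borel_measurable lborel"
    unfolding Gf_def by (rule fps.borel_measurable_nn_integral)
  then show ?thesis by simp
qed

lemma Gf_zero: "1 \<le> i \<Longrightarrow> i < n \<Longrightarrow> t \<notin> {0..lam} \<Longrightarrow> Gf i x t = 0"
proof -
  assume i: "1 \<le> i" "i < n" "t \<notin> {0..lam}"
  have "\<And>s. (\<lambda>j\<in>{1..<n}. if j < i then x j - x (Suc j) else if j = i then t else s j) \<notin> Bc"
  proof
    fix s assume "(\<lambda>j\<in>{1..<n}. if j < i then x j - x (Suc j) else if j = i then t else s j) \<in> Bc"
    then have z: "(\<lambda>j\<in>{1..<n}. if j < i then x j - x (Suc j) else if j = i then t else s j) \<in> PiE {1..<n} (\<lambda>_. {0..lam})"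
      using Bcc by blast
    have "(\<lambda>j\<in>{1..<n}. if j < i then x j - x (Suc j) else if j = i then t else s j) i \<in> {0..lam}"
      by (rule PiE_mem[OF z]) (use i in auto)
    then show False using i by simp
  qed
  then show ?thesis unfolding Gf_def by simp
qed

lemma Lf_split: "i < n \<Longrightarrow> Lf i x = (\<integral>\<^sup>+ t. Gf i x t \<partial>lborel)"
proof -
  assume i: "i < n"
  interpret ps: product_sigma_finite "\<lambda>_::nat. lborel" by (rule product_sigma_finite_lborel)
  have eq: "{i..<n} = insert i {Suc i..<n}" using i by auto
  have m: "(\<lambda>s. indicator Bc (\<lambda>j\<in>{1..<n}. if j < i then x j - x (Suc j) else s j) :: ennreal)
     \<in> borel_measurable (PiM (insert i {Suc i..<n}) (\<lambda>_. lborel))"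
    unfolding eq[symmetric]
    using measurable_compose[OF restr_meas1[where n=n and i=i and a="\<lambda>j. x j - x (Suc j)"] borel_measurable_indicator[OF Bcs]] by simp
  show ?thesis
    unfolding Lf_def Gf_def eq
    by (subst ps.product_nn_integral_insert_rev[OF _ _ m])
       (auto intro!: nn_integral_cong arg_cong[where f="indicator Bc"] restrict_ext)
qed

lemma Lf_last: "Lf n x = indicator Bc (sfl_gaps n x)"
proof -
  have "Lf n x = (\<integral>\<^sup>+ s. indicator Bc (\<lambda>j\<in>{1..<n}. if j < n then x j - x (Suc j) else s j) \<partial>count_space {\<lambda>_. undefined})"
    unfolding Lf_def by (simp add: PiM_empty)
  also have "\<dots> = indicator Bc (\<lambda>j\<in>{1..<n}. if j < n then x j - x (Suc j) else undefined)"
    by (simp add: nn_integral_count_space_finite)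
  also have "(\<lambda>j\<in>{1..<n}. if j < n then x j - x (Suc j) else undefined) = sfl_gaps n x"
    unfolding sfl_gaps_def by (intro restrict_ext) auto
  finally show ?thesis .
qed

lemma Lf_first: "Lf 1 x = emeasure (PiM {1..<n} (\<lambda>_. lborel)) Bc"
proof -
  have sB: "Bc \<in> sets (PiM {1..<n} (\<lambda>_. lborel))"
    using Bcs by (metis sets_PiM_cong sets_lborel)
  have "Lf 1 x = (\<integral>\<^sup>+ s. indicator Bc s \<partial>PiM {1..<n} (\<lambda>_. lborel))"
    unfolding Lf_def
    by (intro nn_integral_cong) (auto simp: space_PiM PiE_def extensional_def restrict_def cong: if_cong
        intro!: arg_cong[where f="indicator Bc"])
  also have "\<dots> = emeasure (PiM {1..<n} (\<lambda>_. lborel)) Bc" using sB by simp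
  finally show ?thesis .
qed


abbreviation Mi :: "sfl_innov measure" where "Mi \<equiv> sfl_innov_measure \<theta>"

definition FF :: "(nat \<Rightarrow> real) \<Rightarrow> ennreal" where
  "FF x = indicator {x. x 0 = 0 \<and> sfl_gaps n x \<in> Bc} x"

definition VV :: "nat \<Rightarrow> (nat \<Rightarrow> real) \<Rightarrow> ennreal" where
  "VV k x = WW (stp n) Mi FF (2 * n - 1 - k) k x"

abbreviation kap :: ennreal where "kap \<equiv> (\<integral>\<^sup>+ x. indicator {1..} x \<partial>Me)"
abbreviation cc :: ennreal where "cc \<equiv> ennreal (1 / Rmax)"

lemma VV_step: "k < 2 * n - 1 \<Longrightarrow> VV k x = (\<integral>\<^sup>+ w. VV (Suc k) (stp n k x w) \<partial>Mi)"
proof -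
  assume k: "k < 2 * n - 1"
  then have "2 * n - 1 - k = Suc (2 * n - 1 - Suc k)" by simp
  then show ?thesis unfolding VV_def by simp
qed

lemma VV_last: "VV (2 * n - 1) x = FF x"
  unfolding VV_def by simp

lemma Rmax_ge: "Rmax \<ge> R0" using Rmax n2 lp by simp

lemma sweep:
  "1 \<le> i \<Longrightarrow> i \<le> n \<Longrightarrow> x 0 = 0 \<Longrightarrow> ordd n x \<Longrightarrow> (i < n \<longrightarrow> real (n - i) * lam \<le> x i - x (Suc i))
    \<Longrightarrow> sfl_rate n x \<le> Rmax \<Longrightarrow> kap * cc ^ (n - i) * Lf i x \<le> VV (n - 2 + i) x"
proof (induction "n - i" arbitrary: i x)
  case 0
  then have i: "i = n" by simp
  have k: "n - 2 + i = 2 * n - 2" "2 * n - 2 < 2 * n - 1" using i n2 by auto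
  let ?L = "indicator Bc (sfl_gaps n x) :: ennreal"
  have pw: "VV (Suc (2 * n - 2)) (stp n (2 * n - 2) x w) =
      indicator {1..} (fst w) * (\<lambda>_. 1) (fst (snd w)) * (\<lambda>_. 1) (fst (snd (snd w))) * (\<lambda>_. ?L) (snd (snd (snd w)))" for w
  proof -
    have e: "Suc (2 * n - 2) = 2 * n - 1" using n2 by simp
    show ?thesis using "0.prems" unfolding e VV_last
      by (cases w) (auto simp: stp_def FF_def indicator_def)
  qed
  have "VV (n - 2 + i) x = (\<integral>\<^sup>+ w. indicator {1..} (fst w) * (\<lambda>_. 1) (fst (snd w)) * (\<lambda>_. 1) (fst (snd (snd w))) * (\<lambda>_. ?L) (snd (snd (snd w))) \<partial>Mi)"
    unfolding k(1) VV_step[OF k(2)] pw by simp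
  also have "\<dots> = kap * ((\<integral>\<^sup>+ x. 1 \<partial>Mu) * ((\<integral>\<^sup>+ x. 1 \<partial>Mu) * (\<integral>\<^sup>+ x. ?L \<partial>\<theta>)))"
    by (rule int4[OF thp ths]) auto
  also have "\<dots> = kap * ?L"
    using int_one_prob[OF prob_Mu] prob_space.emeasure_space_1[OF thp] by simp
  finally show ?case using i Lf_last by simp
next
  case (Suc d)
  then have i: "1 \<le> i" "i < n" by auto
  define k where "k = n - 2 + i"
  have k: "k < 2 * n - 1" "k < 2 * n - 2" "Suc k = n - 2 + Suc i" "pl n k = Suc i" "\<not> k < n - 1"
    using i n2 unfolding k_def pl_def by auto
  define m where "m = x i - x (Suc i)"
  define R where "R = sfl_rate n x"
  have ni: "real (n - i) \<ge> 1" using i by simp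
  have mge: "real (n - i) * lam \<le> m" using Suc.prems i unfolding m_def by auto
  have mpos: "m > 0" using mge ni lp by (smt (verit) mult_le_cancel_right1)
  have mlam: "lam \<le> m" using mge ni lp by (smt (verit) mult_le_cancel_right1)
  have ord: "ordd n x" by fact
  have x1i: "x i \<le> x 1" using ordd_mono[OF ord, of 1 i] i by auto
  have xni: "x n \<le> x (Suc i)" using ordd_mono[OF ord, of "Suc i" n] i by auto
  have Rdef: "R = 1 + x 1 - x n" unfolding R_def using rate_eq n2 by simp
  have R1: "R \<ge> 1" using Rdef ordd_mono[OF ord, of 1 n] n2 by auto
  have RR: "R \<le> Rmax" using Suc.prems unfolding R_def by simp
  define C' where "C' = kap * cc ^ (n - Suc i)"
  have pw: "indicator {0..} (fst w) * indicator {u. win n (Suc i) x u} (fst (snd w))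
      * (indicator {0..1} (fst (snd (snd w))) * (C' * Gf i x ((1 - fst (snd (snd w))) * m)))
      * (\<lambda>_. 1) (snd (snd (snd w))) \<le> VV (Suc k) (stp n k x w)" for w
  proof -
    obtain e u v j where w: "w = (e, u, v, j)" by (cases w) auto
    show ?thesis
    proof (cases "0 \<le> e \<and> win n (Suc i) x u \<and> v \<in> {0..1} \<and> (1 - v) * m \<in> {0..lam}")
      case False
      then have z: "indicator {0..} e * indicator {u. win n (Suc i) x u} u * (indicator {0..1} v * (C' * Gf i x ((1 - v) * m))) = (0::ennreal)"
        using Gf_zero[OF i] by (auto simp: indicator_def)
      have "indicator {0..} (fst w) * indicator {u. win n (Suc i) x u} (fst (snd w))
      * (indicator {0..1} (fst (snd (snd w))) * (C' * Gf i x ((1 - fst (snd (snd w))) * m)))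
      * (\<lambda>_. 1) (snd (snd (snd w))) = (0::ennreal)" (is "?l = 0") using z w by simp
      show ?thesis by (subst \<open>?l = 0\<close>) simp
    next
      case True
      define x' where "x' = mv (Suc i) x v j"
      have st: "stp n k x w = x'"
        using True "Suc.prems" k unfolding w x'_def stp_def by simp
      have x'a: "x' q = (if q = Suc i then x (Suc i) + v * m else x q)" for q
        using i unfolding x'_def mv_apply m_def by auto
      have v01: "0 \<le> v" "v \<le> 1" using True by auto
      have vm: "0 \<le> v * m" "v * m \<le> m" using v01 mpos by (auto simp: mult_le_cancel_right1)
      have x'0: "x' 0 = 0" using x'a "Suc.prems" by simp
      have ord': "ordd n x'"
        unfolding ordd_def
      proof
        fix q assume q: "q \<in> {2..n}"
        have "x q \<le> x (q - 1)" using ord q unfolding ordd_def by auto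
        then show "x' q \<le> x' (q - 1)"
          using q vm unfolding x'a m_def by auto
      qed
      have gap': "Suc i < n \<longrightarrow> real (n - Suc i) * lam \<le> x' (Suc i) - x' (Suc (Suc i))"
      proof
        assume si: "Suc i < n"
        have "x (Suc (Suc i)) \<le> x (Suc i)" using ordd_mono[OF ord, of "Suc i" "Suc (Suc i)"] si by auto
        moreover have "(1 - v) * m \<le> lam" using True by auto
        moreover have "real (n - Suc i) = real (n - i) - 1" using si by auto
        ultimately show "real (n - Suc i) * lam \<le> x' (Suc i) - x' (Suc (Suc i))"
          using mge unfolding x'a by (auto simp: algebra_simps)
      qed
      have rate': "sfl_rate n x' \<le> Rmax"
      proof -
        have "x n \<le> x' n" using vm unfolding x'a by auto
        then show ?thesis using rate_eq[of n x'] n2 x'a[of 1] i Rdef RR by auto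
      qed
      have IH: "kap * cc ^ (n - Suc i) * Lf (Suc i) x' \<le> VV (n - 2 + Suc i) x'"
        using Suc.hyps(1)[of "Suc i" x'] Suc.hyps(2) i x'0 ord' gap' rate' by simp
      have LG: "Lf (Suc i) x' = Gf i x ((1 - v) * m)"
        unfolding Lf_def Gf_def
        by (intro nn_integral_cong arg_cong[where f="indicator Bc"] restrict_ext)
           (auto simp: x'a m_def algebra_simps)
      have ones: "indicator {0..} e = (1::ennreal)" "indicator {u. win n (Suc i) x u} u = (1::ennreal)"
          "indicator {0..1} v = (1::ennreal)" using True by auto
      show ?thesis using IH LG st k(3) ones unfolding w by (simp add: C'_def)
    qed
  qed
  have "VV k x = (\<integral>\<^sup>+ w. VV (Suc k) (stp n k x w) \<partial>Mi)" by (rule VV_step[OF k(1)])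
  also have "\<dots> \<ge> (\<integral>\<^sup>+ w. indicator {0..} (fst w) * indicator {u. win n (Suc i) x u} (fst (snd w))
      * (indicator {0..1} (fst (snd (snd w))) * (C' * Gf i x ((1 - fst (snd (snd w))) * m)))
      * (\<lambda>_. 1) (snd (snd (snd w))) \<partial>Mi)" (is "_ \<ge> ?P")
    by (intro nn_integral_mono pw)
  finally have ge: "?P \<le> VV k x" .
  have Rpos: "R > 0" using R1 by simp
  have winset: "{u. win n (Suc i) x u} = {(1 + x 1 - x i) / R ..< (1 + x 1 - x (Suc i)) / R}"
    using i Rpos unfolding win_def R_def[symmetric]
    by (auto simp: cum_eq pos_divide_le_eq pos_less_divide_eq)
  have Gm: "(\<lambda>v. Gf i x ((1 - v) * m)) \<in> borel_measurable borel"
    by (rule measurable_compose[OF _ Gf_meas]) simp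
  have Gm2: "(\<lambda>v. C' * Gf i x ((1 - v) * m)) \<in> borel_measurable borel"
    using Gm by measurable
  have eqP: "?P = (\<integral>\<^sup>+z. indicator {0..} z \<partial>Me) * ((\<integral>\<^sup>+z. indicator {u. win n (Suc i) x u} z \<partial>Mu)
      * ((\<integral>\<^sup>+ v. indicator {0..1} v * (C' * Gf i x ((1 - v) * m)) \<partial>Mu) * (\<integral>\<^sup>+z. 1 \<partial>\<theta>)))"
    by (rule int4[OF thp ths]) (use Gm2 in \<open>auto simp: winset\<close>)
  have A1: "(\<integral>\<^sup>+z. indicator {0..} z \<partial>Me) = 1" by (rule Me_nonneg)
  have A4: "(\<integral>\<^sup>+z. 1 \<partial>\<theta>) = 1" by (rule int_one_prob[OF thp])
  have A2: "(\<integral>\<^sup>+z. indicator {u. win n (Suc i) x u} z \<partial>Mu) = ennreal (m / R)"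
  proof -
    have "(\<integral>\<^sup>+z. indicator {u. win n (Suc i) x u} z \<partial>Mu)
        = ennreal ((1 + x 1 - x (Suc i)) / R - (1 + x 1 - x i) / R)"
      unfolding winset
    proof (rule Mu_Ico)
      show "0 \<le> (1 + x 1 - x i) / R" using x1i Rpos by simp
      show "(1 + x 1 - x i) / R \<le> (1 + x 1 - x (Suc i)) / R" using mpos Rpos unfolding m_def
        by (simp add: divide_right_mono)
      show "(1 + x 1 - x (Suc i)) / R \<le> 1" using xni Rpos Rdef by simp
    qed
    also have "(1 + x 1 - x (Suc i)) / R - (1 + x 1 - x i) / R = m / R"
      unfolding m_def by (simp add: diff_divide_distrib[symmetric])
    finally show ?thesis .
  qed
  let ?G = "Gf i x"
  have A3: "(\<integral>\<^sup>+ v. indicator {0..1} v * (C' * ?G ((1 - v) * m)) \<partial>Mu) = C' * (ennreal (1 / m) * Lf i x)"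
  proof -
    have m3: "(\<lambda>v. indicator {0..1} v * (C' * ?G ((1 - v) * m))) \<in> borel_measurable lborel"
      using Gm2 by simp
    have "(\<integral>\<^sup>+ v. indicator {0..1} v * (C' * ?G ((1 - v) * m)) \<partial>Mu)
        = (\<integral>\<^sup>+ v. indicator {0..1} v * (C' * ?G ((1 - v) * m)) * indicator {0..1} v \<partial>lborel) / emeasure lborel {0..1::real}"
      by (rule nn_integral_uniform_measure[OF m3]) simp
    also have "\<dots> = (\<integral>\<^sup>+ v. C' * (indicator {0..1} v * ?G ((1 - v) * m)) \<partial>lborel)"
      by (simp add: divide_ennreal_def) (intro nn_integral_cong, simp add: indicator_def)
    also have "\<dots> = C' * (\<integral>\<^sup>+ v. indicator {0..1} v * ?G ((1 - v) * m) \<partial>lborel)"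
      by (rule nn_integral_cmult) (use Gm in simp)
    also have "(\<integral>\<^sup>+ v. indicator {0..1} v * ?G ((1 - v) * m) \<partial>lborel) = (\<integral>\<^sup>+ v. ?G (m + (- m) * v) \<partial>lborel)"
    proof (rule nn_integral_cong)
      fix v :: real
      show "indicator {0..1} v * ?G ((1 - v) * m) = ?G (m + (- m) * v)"
      proof (cases "v \<in> {0..1}")
        case True then show ?thesis by (simp add: algebra_simps)
      next
        case False
        then have "(1 - v) * m \<notin> {0..lam}"
        proof (cases "v < 0")
          case True
          then have "(1 - v) * m > m" using mpos by (simp add: algebra_simps mult_pos_neg)
          then show ?thesis using mlam by auto
        next
          case False
          then have "v > 1" using \<open>v \<notin> {0..1}\<close> by auto
          then have "(1 - v) * m < 0" using mpos by (simp add: mult_neg_pos)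
          then show ?thesis by auto
        qed
        then have "?G ((1 - v) * m) = 0" by (rule Gf_zero[OF i])
        moreover have "m + (- m) * v = (1 - v) * m" by (simp add: algebra_simps)
        ultimately show ?thesis using False by simp
      qed
    qed
    also have "(\<integral>\<^sup>+ v. ?G (m + (- m) * v) \<partial>lborel) = ennreal (1 / m) * Lf i x"
    proof -
      have "Lf i x = (\<integral>\<^sup>+ t. ?G t \<partial>lborel)" by (rule Lf_split[OF i(2)])
      also have "\<dots> = ennreal \<bar>- m\<bar> * (\<integral>\<^sup>+ v. ?G (m + (- m) * v) \<partial>lborel)"
        by (rule nn_integral_real_affine[OF Gf_meas]) (use mpos in simp)
      finally have "Lf i x = ennreal m * (\<integral>\<^sup>+ v. ?G (m + (- m) * v) \<partial>lborel)" using mpos by simp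
      then have "ennreal (1 / m) * Lf i x = ennreal (1 / m) * ennreal m * (\<integral>\<^sup>+ v. ?G (m + (- m) * v) \<partial>lborel)"
        by (simp add: mult.assoc)
      also have "ennreal (1 / m) * ennreal m = 1" using mpos by (simp add: ennreal_mult''[symmetric])
      finally show ?thesis by simp
    qed
    finally show ?thesis .
  qed
  have "kap * cc ^ (n - i) * Lf i x = cc * (C' * Lf i x)"
    unfolding C'_def using i by (cases "n - i") (auto simp: Suc_diff_Suc[symmetric] mult.assoc mult.left_commute)
  also have "\<dots> \<le> ennreal (1 / R) * (C' * Lf i x)"
    by (intro mult_right_mono ennreal_leI divide_left_mono) (use R1 RR in auto)
  also have "ennreal (1 / R) = ennreal (m / R) * ennreal (1 / m)"
    using mpos Rpos by (simp add: ennreal_mult''[symmetric])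
  also have "ennreal (m / R) * ennreal (1 / m) * (C' * Lf i x) = ?P"
    unfolding eqP A1 A2 A3 A4 by (simp add: mult_ac)
  finally show ?case using ge unfolding k_def by simp
qed

abbreviation Jset :: "real set" where "Jset \<equiv> {lam .. lam * (1 + 1 / (real n - 1))}"

lemma leader:
  "j \<le> n - 1 \<Longrightarrow> x 0 = 0 \<Longrightarrow> ordd n x \<Longrightarrow> real j * lam \<le> x 1 - x 2
    \<Longrightarrow> sfl_rate n x \<le> R0 + 2 * lam * real j
    \<Longrightarrow> kap * cc ^ (n - 1) * emeasure (PiM {1..<n} (\<lambda>_. lborel)) Bc * (cc * emeasure \<theta> Jset) ^ (n - 1 - j) \<le> VV j x"
proof (induction "n - 1 - j" arbitrary: j x)
  case 0
  then have j: "j = n - 1" by simp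
  have a: "n - 2 + 1 = j" using j n2 by simp
  have b: "1 < n \<longrightarrow> real (n - 1) * lam \<le> x 1 - x (Suc 1)" using "0.prems" j n2 by (simp add: numeral_2_eq_2 of_nat_diff)
  have c: "sfl_rate n x \<le> Rmax" using "0.prems" j Rmax n2 by (simp add: of_nat_diff)
  have "kap * cc ^ (n - 1) * Lf 1 x \<le> VV (n - 2 + 1) x"
    by (rule sweep) (use n2 "0.prems" b c in auto)
  then show ?case using a "0.hyps" Lf_first[of x] by simp
next
  case (Suc d)
  then have j: "j < n - 1" by simp
  have k: "j < 2 * n - 1" "j < 2 * n - 2" "pl n j = 1" using j n2 unfolding pl_def by auto
  define R where "R = sfl_rate n x"
  have ord: "ordd n x" by fact
  have Rdef: "R = 1 + x 1 - x n" unfolding R_def using rate_eq n2 by simp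
  have R1: "R \<ge> 1" using Rdef ordd_mono[OF ord, of 1 n] n2 by auto
  have Rpos: "R > 0" using R1 by simp
  have RR: "R \<le> R0 + 2 * lam * real j" using Suc.prems unfolding R_def by simp
  define D' where "D' = kap * cc ^ (n - 1) * emeasure (PiM {1..<n} (\<lambda>_. lborel)) Bc * (cc * emeasure \<theta> Jset) ^ (n - 1 - Suc j)"
  have Jle: "lam * (1 + 1 / (real n - 1)) \<le> 2 * lam"
  proof -
    have "1 / (real n - 1) \<le> 1" using n2 by simp
    then have "lam * (1 / (real n - 1)) \<le> lam * 1" using lp by (intro mult_left_mono) auto
    then show ?thesis by (simp add: algebra_simps)
  qed
  have pw: "indicator {0..} (fst w) * indicator {0..<1/R} (fst (snd w)) * (\<lambda>_. 1) (fst (snd (snd w)))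
      * (\<lambda>J. indicator Jset J * D') (snd (snd (snd w))) \<le> VV (Suc j) (stp n j x w)" for w
  proof -
    obtain e u v J where w: "w = (e, u, v, J)" by (cases w) auto
    show ?thesis
    proof (cases "0 \<le> e \<and> u \<in> {0..<1/R} \<and> J \<in> Jset")
      case False
      then have z: "indicator {0..} e * indicator {0..<1/R} u * indicator Jset J * D' = (0::ennreal)"
        by (auto simp: indicator_def)
      have "indicator {0..} (fst w) * indicator {0..<1/R} (fst (snd w)) * (\<lambda>_. 1) (fst (snd (snd w)))
      * (\<lambda>J. indicator Jset J * D') (snd (snd (snd w))) = (0::ennreal)" (is "?l = 0")
        using z w by (simp add: mult.assoc)
      show ?thesis by (subst \<open>?l = 0\<close>) simp
    next
      case True
      define x' where "x' = x(1 := x 1 + J)"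
      have uR: "u * R < 1" using True Rpos by (simp add: pos_less_divide_eq)
      have wn: "win n 1 x u" unfolding win_def using uR R_def by (simp add: cum_eq)
      have st: "stp n j x w = x'"
        using True "Suc.prems" k wn unfolding w x'_def stp_def mv_def by simp
      have J: "lam \<le> J" "J \<le> 2 * lam" using True Jle by auto
      have x'0: "x' 0 = 0" using "Suc.prems" unfolding x'_def by simp
      have ord': "ordd n x'"
        unfolding ordd_def
      proof
        fix q assume q: "q \<in> {2..n}"
        have "x q \<le> x (q - 1)" using ord q unfolding ordd_def by auto
        then show "x' q \<le> x' (q - 1)" using q J lp unfolding x'_def by auto
      qed
      have gap': "real (Suc j) * lam \<le> x' 1 - x' 2"
        using Suc.prems J unfolding x'_def by (simp add: algebra_simps)
      have rate': "sfl_rate n x' \<le> R0 + 2 * lam * real (Suc j)"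
        using rate_eq[of n x'] n2 RR J Rdef unfolding x'_def by (simp add: algebra_simps)
      have IH: "D' \<le> VV (Suc j) x'"
        using Suc.hyps(1)[of "Suc j" x'] Suc.hyps(2) j x'0 ord' gap' rate' unfolding D'_def by simp
      have ones: "indicator {0..} e = (1::ennreal)" "indicator {0..<1/R} u = (1::ennreal)"
          "indicator Jset J = (1::ennreal)" using True by auto
      show ?thesis using IH st ones unfolding w by simp
    qed
  qed
  have "VV j x = (\<integral>\<^sup>+ w. VV (Suc j) (stp n j x w) \<partial>Mi)" by (rule VV_step[OF k(1)])
  also have "\<dots> \<ge> (\<integral>\<^sup>+ w. indicator {0..} (fst w) * indicator {0..<1/R} (fst (snd w)) * (\<lambda>_. 1) (fst (snd (snd w)))
      * (\<lambda>J. indicator Jset J * D') (snd (snd (snd w))) \<partial>Mi)" (is "_ \<ge> ?P")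
    by (intro nn_integral_mono pw)
  finally have ge: "?P \<le> VV j x" .
  have Js: "Jset \<in> sets \<theta>" using ths by simp
  have eqP: "?P = (\<integral>\<^sup>+z. indicator {0..} z \<partial>Me) * ((\<integral>\<^sup>+z. indicator {0..<1/R} z \<partial>Mu)
      * ((\<integral>\<^sup>+ z. 1 \<partial>Mu) * (\<integral>\<^sup>+z. indicator Jset z * D' \<partial>\<theta>)))"
    by (rule int4[OF thp ths]) auto
  have A2: "(\<integral>\<^sup>+z. indicator {0..<1/R} z \<partial>Mu) = ennreal (1 / R)"
    using Mu_Ico[of 0 "1/R"] R1 by simp
  have A4: "(\<integral>\<^sup>+z. indicator Jset z * D' \<partial>\<theta>) = emeasure \<theta> Jset * D'"
    using Js by (simp add: nn_integral_multc)
  have "kap * cc ^ (n - 1) * emeasure (PiM {1..<n} (\<lambda>_. lborel)) Bc * (cc * emeasure \<theta> Jset) ^ (n - 1 - j)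
      = cc * (emeasure \<theta> Jset * D')"
    unfolding D'_def using j by (cases "n - 1 - j") (auto simp: Suc_diff_Suc[symmetric] mult_ac)
  also have "\<dots> \<le> ennreal (1 / R) * (emeasure \<theta> Jset * D')"
  proof -
    have "real j \<le> real n - 1" using j by linarith
    then have "2 * lam * real j \<le> 2 * lam * (real n - 1)" using lp by (intro mult_left_mono) auto
    then have RRm: "R \<le> Rmax" using RR Rmax by simp
    show ?thesis by (intro mult_right_mono ennreal_leI divide_left_mono) (use R1 RRm in auto)
  qed
  also have "\<dots> = ?P"
    unfolding eqP Me_nonneg A2 int_one_prob[OF prob_Mu] A4 by simp
  finally show ?case using ge by simp
qed

lemma FF_meas: "FF \<in> borel_measurable SS"
proof -
  have [measurable]: "Bc \<in> sets (PiM {1..<n} (\<lambda>_. borel))" by (rule Bcs)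
  have "{x \<in> space SS. x 0 = 0 \<and> sfl_gaps n x \<in> Bc} \<in> sets SS" by measurable
  then have "{x. x 0 = 0 \<and> sfl_gaps n x \<in> Bc} \<in> sets SS" by (simp add: space_PiM)
  then show ?thesis unfolding FF_def[abs_def] by (rule borel_measurable_indicator)
qed

lemma markov_VV: "x0 \<in> space SS \<Longrightarrow>
   (\<integral>\<^sup>+ \<omega>. FF (psi (stp n) x0 \<omega> (2 * n - 1)) \<partial>PiM {..<2 * n - 1} (\<lambda>_. Mi)) = VV 0 x0"
  unfolding VV_def
  by (simp add: markov[OF prob_innov[OF thp] stp_meas[OF ths] _ FF_meas])

lemma VV0_pos:
  assumes "x0 0 = 0" "ordd n x0" "0 \<le> x0 1 - x0 2" "sfl_rate n x0 \<le> R0"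
    and Bpos: "emeasure (PiM {1..<n} (\<lambda>_. lborel)) Bc > 0" and Jpos: "emeasure \<theta> Jset > 0"
  shows "VV 0 x0 > 0"
proof -
  have le: "kap * cc ^ (n - 1) * emeasure (PiM {1..<n} (\<lambda>_. lborel)) Bc * (cc * emeasure \<theta> Jset) ^ (n - 1 - 0) \<le> VV 0 x0"
    by (rule leader) (use assms in auto)
  have "cc > 0"
  proof -
    have "0 \<le> 2 * lam * (real n - 1)" using lp n2 by simp
    then have "Rmax > 0" using R0 Rmax by linarith
    then show ?thesis by simp
  qed
  moreover have "kap > 0" by (rule Me_ge1_pos)
  ultimately have "0 < kap * cc ^ (n - 1) * emeasure (PiM {1..<n} (\<lambda>_. lborel)) Bc * (cc * emeasure \<theta> Jset) ^ (n - 1 - 0)"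
    using Bpos Jpos unfolding ennreal_zero_less_mult_iff
    by (intro conjI pow_pos_enn) (simp_all only: ennreal_zero_less_mult_iff)
  then show ?thesis using le by (rule order_less_le_trans)
qed

lemma step_alive:
  assumes "k < 2 * n - 2" "psi (stp n) x0 om (Suc k) 0 = 0"
  shows "psi (stp n) x0 om k 0 = 0 \<and> ordd n (psi (stp n) x0 om k) \<and> 0 \<le> fst (om k)
    \<and> win n (pl n k) (psi (stp n) x0 om k) (fst (snd (om k)))
    \<and> psi (stp n) x0 om (Suc k) = mv (pl n k) (psi (stp n) x0 om k) (fst (snd (snd (om k)))) (snd (snd (snd (om k))))"
proof -
  obtain e u v j where w: "om k = (e, u, v, j)" by (cases "om k") auto
  show ?thesis using assms unfolding w by (auto simp: stp_def w split: if_splits)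
qed

lemma hold_alive:
  assumes "psi (stp n) x0 om (Suc (2 * n - 2)) 0 = 0"
  shows "psi (stp n) x0 om (2 * n - 2) 0 = 0 \<and> ordd n (psi (stp n) x0 om (2 * n - 2)) \<and> 1 \<le> fst (om (2 * n - 2))
    \<and> psi (stp n) x0 om (Suc (2 * n - 2)) = psi (stp n) x0 om (2 * n - 2)"
proof -
  obtain e u v j where w: "om (2 * n - 2) = (e, u, v, j)" by (cases "om (2 * n - 2)") auto
  show ?thesis using assms unfolding w by (auto simp: stp_def w split: if_splits)
qed

lemma alive_down:
  assumes "psi (stp n) x0 om (Suc (2 * n - 2)) 0 = 0"
  shows "k \<le> 2 * n - 2 \<Longrightarrow> psi (stp n) x0 om k 0 = 0"
proof -
  have "\<forall>k. k \<le> 2 * n - 2 \<longrightarrow> 2 * n - 2 - k = d \<longrightarrow> psi (stp n) x0 om k 0 = 0" for d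
  proof (induction d)
    case 0
    show ?case
    proof (intro allI impI)
      fix k assume "k \<le> 2 * n - 2" "2 * n - 2 - k = 0"
      then have "k = 2 * n - 2" by simp
      then show "psi (stp n) x0 om k 0 = 0" using hold_alive[OF assms] by simp
    qed
  next
    case (Suc d)
    show ?case
    proof (intro allI impI)
      fix k assume k: "k \<le> 2 * n - 2" "2 * n - 2 - k = Suc d"
      then have "psi (stp n) x0 om (Suc k) 0 = 0"
        using spec[OF Suc.IH, of "Suc k"] by (simp only: Suc_le_eq diff_Suc_eq_diff_pred)
      then show "psi (stp n) x0 om k 0 = 0" using step_alive[of k x0 om] k by auto
    qed
  qed
  then show "k \<le> 2 * n - 2 \<Longrightarrow> psi (stp n) x0 om k 0 = 0" by blast
qed

lemma pl_range: "k < 2 * n - 2 \<Longrightarrow> 1 \<le> pl n k \<and> pl n k \<le> n"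
  unfolding pl_def using n2 by auto

lemma jump_mv: "sfl_jump n x w = mv (sfl_pick n x (fst w)) x (fst (snd w)) (snd (snd w))"
  by (cases w) (auto simp: sfl_jump_def mv_def Let_def)

lemma chain_eq:
  assumes "psi (stp n) x0 om (Suc (2 * n - 2)) 0 = 0"
  shows "k \<le> 2 * n - 2 \<Longrightarrow> psi (stp n) x0 om k = sfl_chain n x0 om k"
proof (induction k)
  case 0 then show ?case by simp
next
  case (Suc k)
  then have k: "k < 2 * n - 2" by simp
  have al: "psi (stp n) x0 om (Suc k) 0 = 0" using alive_down[OF assms] Suc.prems by blast
  note sa = step_alive[OF k al]
  have "sfl_pick n (psi (stp n) x0 om k) (fst (snd (om k))) = pl n k"
    using pick_eq[of n "psi (stp n) x0 om k" "pl n k"] sa pl_range[OF k] by auto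
  then show ?case using sa Suc.IH k by (simp add: jump_mv)
qed

lemma rate_pos: "ordd n x \<Longrightarrow> sfl_rate n x \<ge> 1"
  using rate_eq[of n x] ordd_mono[of n x 1 n] n2 by auto

lemma T_step:
  assumes "psi (stp n) x0 om (Suc (2 * n - 2)) 0 = 0" "k \<le> 2 * n - 2"
  shows "sfl_time n x0 om k \<le> sfl_time n x0 om (Suc k)"
proof -
  have ce: "psi (stp n) x0 om k = sfl_chain n x0 om k" using chain_eq[OF assms(1) assms(2)] .
  have "ordd n (psi (stp n) x0 om k) \<and> 0 \<le> fst (om k)"
  proof (cases "k < 2 * n - 2")
    case True
    have "psi (stp n) x0 om (Suc k) 0 = 0"
      by (rule alive_down[OF assms(1)]) (use True in simp)
    then show ?thesis using step_alive[OF True] by auto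
  next
    case False
    then have "k = 2 * n - 2" using assms by simp
    then show ?thesis using hold_alive[OF assms(1)] by auto
  qed
  then have "sfl_rate n (sfl_chain n x0 om k) \<ge> 1" "0 \<le> fst (om k)" using ce rate_pos by auto
  then show ?thesis by simp
qed

lemma T_mono:
  assumes "psi (stp n) x0 om (Suc (2 * n - 2)) 0 = 0"
  shows "a \<le> b \<Longrightarrow> b \<le> Suc (2 * n - 2) \<Longrightarrow> sfl_time n x0 om a \<le> sfl_time n x0 om b"
proof (induction b)
  case 0 then show ?case by simp
next
  case (Suc b)
  show ?case
  proof (cases "a = Suc b")
    case True then show ?thesis by simp
  next
    case False
    then have "sfl_time n x0 om a \<le> sfl_time n x0 om b" using Suc by simp
    also have "\<dots> \<le> sfl_time n x0 om (Suc b)" using T_step[OF assms, of b] Suc.prems by simp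
    finally show ?thesis .
  qed
qed

lemma Y_at:
  assumes al: "psi (stp n) (sfl_init y) om (Suc (2 * n - 2)) 0 = 0"
    and t: "sfl_time n (sfl_init y) om (2 * n - 2) \<le> t" "t < sfl_time n (sfl_init y) om (Suc (2 * n - 2))"
  shows "sfl_Y n y om t = Some (sfl_gaps n (psi (stp n) (sfl_init y) om (2 * n - 2)))"
proof -
  let ?T = "sfl_time n (sfl_init y) om"
  let ?N = "2 * n - 2"
  have L: "(LEAST k. ?T k \<le> t \<and> t < ?T (Suc k)) = ?N"
  proof (rule Least_equality)
    show "?T ?N \<le> t \<and> t < ?T (Suc ?N)" using t by simp
  next
    fix k assume k: "?T k \<le> t \<and> t < ?T (Suc k)"
    show "?N \<le> k"
    proof (rule ccontr)
      assume "\<not> ?N \<le> k"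
      then have "?T (Suc k) \<le> ?T ?N" using T_mono[OF al, of "Suc k" ?N] by simp
      then show False using k t by simp
    qed
  qed
  have ex: "\<exists>k. ?T k \<le> t \<and> t < ?T (Suc k)" using t by blast
  show ?thesis unfolding sfl_Y_def Let_def using ex L chain_eq[OF al, of ?N] by simp
qed

lemma occ_pos:
  assumes y: "y \<in> PiE {1..<n} (\<lambda>_. {0..})" and R0def: "R0 = sfl_rate n (sfl_init y)" and BcB: "Bc \<subseteq> B"
    and Bpos: "emeasure (PiM {1..<n} (\<lambda>_. lborel)) Bc > 0" and Jpos: "emeasure \<theta> Jset > 0"
  shows "sfl_occupation \<theta> n y B > 0"
proof -
  let ?xi = "sfl_init y"
  let ?N = "2 * n - 2"
  have K: "2 * n - 1 = Suc ?N" using n2 by simp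
  define c0 where "c0 = 1 / (1 + real (n - 1) * lam)"
  have c0pos: "c0 > 0" unfolding c0_def using lp by (simp add: add_pos_nonneg)
  have pw: "ennreal c0 * FF (psi (stp n) ?xi om (2 * n - 1))
      \<le> (\<integral>\<^sup>+ t. indicator {t. t \<ge> 0 \<and> (\<exists>z\<in>B. sfl_Y n y om t = Some z)} t \<partial>lborel)" for om
  proof (cases "FF (psi (stp n) ?xi om (2 * n - 1)) = 0")
    case True then show ?thesis by simp
  next
    case False
    let ?T = "sfl_time n ?xi om"
    let ?x = "psi (stp n) ?xi om ?N"
    have F: "psi (stp n) ?xi om (Suc ?N) 0 = 0" "sfl_gaps n (psi (stp n) ?xi om (Suc ?N)) \<in> Bc"
      using False unfolding K FF_def by (auto simp: indicator_def split: if_splits)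
    note ha = hold_alive[OF F(1)]
    have gx: "sfl_gaps n ?x \<in> Bc" using F(2) ha by simp
    have ce: "?x = sfl_chain n ?xi om ?N" by (rule chain_eq[OF F(1)]) simp
    have T0: "0 \<le> ?T ?N" using T_mono[OF F(1), of 0 ?N] by simp
    have rle: "sfl_rate n ?x \<le> 1 + real (n - 1) * lam"
    proof -
      have "(\<Sum>i\<in>{2..n}. ?x (i - 1) - ?x i) \<le> real (card {2..n}) * lam"
      proof (rule sum_bounded_above)
        fix i assume i: "i \<in> {2..n}"
        have z: "sfl_gaps n ?x \<in> PiE {1..<n} (\<lambda>_. {0..lam})" using gx Bcc by blast
        have "sfl_gaps n ?x (i - 1) \<in> {0..lam}" by (rule PiE_mem[OF z]) (use i in auto)
        moreover have "sfl_gaps n ?x (i - 1) = ?x (i - 1) - ?x i"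
          using i unfolding sfl_gaps_def by auto
        ultimately show "?x (i - 1) - ?x i \<le> lam" by simp
      qed
      then show ?thesis unfolding sfl_rate_def by simp
    qed
    have r1: "sfl_rate n ?x \<ge> 1" using rate_pos ha by simp
    have len: "c0 \<le> ?T (Suc ?N) - ?T ?N"
    proof -
      have e1: "?T (Suc ?N) - ?T ?N = fst (om ?N) / sfl_rate n (sfl_chain n ?xi om ?N)" by simp
      have "?T (Suc ?N) - ?T ?N = fst (om ?N) / sfl_rate n ?x" using e1 by (simp only: ce)
      moreover have "1 / (1 + real (n - 1) * lam) \<le> fst (om ?N) / sfl_rate n ?x"
        using ha r1 rle by (intro frac_le) auto
      ultimately show ?thesis unfolding c0_def by linarith
    qed
    have sub: "{?T ?N..<?T (Suc ?N)} \<subseteq> {t. t \<ge> 0 \<and> (\<exists>z\<in>B. sfl_Y n y om t = Some z)}"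
    proof
      fix t assume t: "t \<in> {?T ?N..<?T (Suc ?N)}"
      have "sfl_Y n y om t = Some (sfl_gaps n ?x)" using Y_at[OF F(1)] t by auto
      then show "t \<in> {t. t \<ge> 0 \<and> (\<exists>z\<in>B. sfl_Y n y om t = Some z)}" using t T0 gx BcB by auto
    qed
    have "ennreal c0 * FF (psi (stp n) ?xi om (2 * n - 1)) = ennreal c0"
      using F unfolding K FF_def by simp
    also have "\<dots> \<le> ennreal (?T (Suc ?N) - ?T ?N)" using len by (rule ennreal_leI)
    also have "\<dots> = (\<integral>\<^sup>+ t. indicator {?T ?N..<?T (Suc ?N)} t \<partial>lborel)"
      using len c0pos by simp
    also have "\<dots> \<le> (\<integral>\<^sup>+ t. indicator {t. t \<ge> 0 \<and> (\<exists>z\<in>B. sfl_Y n y om t = Some z)} t \<partial>lborel)"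
      using sub by (intro nn_integral_mono) (auto simp: indicator_def)
    finally show ?thesis .
  qed
  interpret P: product_prob_space "\<lambda>_. Mi" "UNIV :: nat set"
    using prob_innov[OF thp] by (simp add: product_prob_space_def product_prob_space_axioms_def product_sigma_finite_def prob_space_imp_sigma_finite)
  have pm: "(\<lambda>om. psi (stp n) ?xi om (2 * n - 1)) \<in> measurable (PiM {..<2 * n - 1} (\<lambda>_. Mi)) SS"
    by (rule psi_meas[OF stp_meas[OF ths]]) (auto simp: space_PiM)
  have gm: "(\<lambda>om. ennreal c0 * FF (psi (stp n) ?xi om (2 * n - 1))) \<in> borel_measurable (PiM {..<2 * n - 1} (\<lambda>_. Mi))"
    using measurable_comp[OF pm FF_meas] by (simp add: comp_def)
  have "sfl_occupation \<theta> n y B \<ge> (\<integral>\<^sup>+ om. ennreal c0 * FF (psi (stp n) ?xi om (2 * n - 1)) \<partial>PiM UNIV (\<lambda>_. Mi))"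
    unfolding sfl_occupation_def sfl_paths_def by (intro nn_integral_mono pw)
  also have "(\<integral>\<^sup>+ om. ennreal c0 * FF (psi (stp n) ?xi om (2 * n - 1)) \<partial>PiM UNIV (\<lambda>_. Mi))
      = (\<integral>\<^sup>+ om. ennreal c0 * FF (psi (stp n) ?xi (restrict om {..<2 * n - 1}) (2 * n - 1)) \<partial>PiM UNIV (\<lambda>_. Mi))"
    by (intro nn_integral_cong arg_cong[where f="\<lambda>z. ennreal c0 * FF z"] psi_cong) auto
  also have "\<dots> = (\<integral>\<^sup>+ om. ennreal c0 * FF (psi (stp n) ?xi om (2 * n - 1))
       \<partial>distr (PiM UNIV (\<lambda>_. Mi)) (PiM {..<2 * n - 1} (\<lambda>_. Mi)) (\<lambda>om. restrict om {..<2 * n - 1}))"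
    apply (rule nn_integral_distr[symmetric])
     apply (rule measurable_restrict_subset, simp)
    apply (subst measurable_distr_eq1)
    apply (rule gm)
    done
  also have "\<dots> = (\<integral>\<^sup>+ om. ennreal c0 * FF (psi (stp n) ?xi om (2 * n - 1)) \<partial>PiM {..<2 * n - 1} (\<lambda>_. Mi))"
    by (subst P.distr_PiM_restrict_finite) auto
  also have "\<dots> = ennreal c0 * VV 0 ?xi"
    using measurable_comp[OF pm FF_meas] markov_VV[of ?xi]
    by (subst nn_integral_cmult) (auto simp: comp_def space_PiM)
  finally have ge: "ennreal c0 * VV 0 ?xi \<le> sfl_occupation \<theta> n y B" .
  have "VV 0 ?xi > 0"
    by (rule VV0_pos) (use init_props[OF n2 y] R0def Bpos Jpos in auto)
  then have "ennreal c0 * VV 0 ?xi > 0" using c0pos by (simp add: ennreal_zero_less_mult_iff)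
  then show ?thesis using ge by (rule order_less_le_trans)
qed
end

theorem proposition5p4:
  fixes n :: nat and \<theta> :: "real measure" and lam :: real
  assumes n2: "n \<ge> 2"
    and theta_prob: "prob_space \<theta>"
    and theta_sets: "sets \<theta> = sets borel"
    and theta_pos: "emeasure \<theta> {0<..} = 1"
    and theta_int: "integrable \<theta> (\<lambda>x. x)"
    and theta_mean: "(\<integral>x. x \<partial>\<theta>) = 1"
    and lam_pos: "lam > 0"
    and theta_lam: "measure \<theta> {lam .. lam * (1 + 1 / (real n - 1))} > 0"
  shows "\<forall>y \<in> PiE {1..<n} (\<lambda>_. {0..}). \<forall>B \<in> sets (sfl_space n).
           B \<subseteq> PiE {1..<n} (\<lambda>_. {0..}) \<longrightarrow> emeasure (sfl_nu n lam) B > 0 \<longrightarrow>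
           sfl_occupation \<theta> n y B > 0"
proof (intro ballI impI)
  fix y :: "nat \<Rightarrow> real" and B :: "(nat \<Rightarrow> real) set"
  assume y: "y \<in> PiE {1..<n} (\<lambda>_. {0..})" and Bs: "B \<in> sets (sfl_space n)"
    and Bsub: "B \<subseteq> PiE {1..<n} (\<lambda>_. {0..})" and Bnu: "emeasure (sfl_nu n lam) B > 0"
  define cube where "cube = PiE {1..<n} (\<lambda>_. {0..lam::real})"
  define R0 where "R0 = sfl_rate n (sfl_init y)"
  have sl: "sets (PiM {1..<n} (\<lambda>_. lborel)) = sets (PiM {1..<n} (\<lambda>_. (borel :: real measure)))"
    by (intro sets_PiM_cong) auto
  have Bs': "B \<in> sets (PiM {1..<n} (\<lambda>_. borel))" using Bs unfolding sfl_space_def .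
  have cs: "cube \<in> sets (PiM {1..<n} (\<lambda>_. borel))" unfolding cube_def
    by (intro sets_PiM_I_finite) auto
  have Bcs: "B \<inter> cube \<in> sets (PiM {1..<n} (\<lambda>_. borel))" using Bs' cs by auto
  have Bcc: "B \<inter> cube \<subseteq> PiE {1..<n} (\<lambda>_. {0..lam})" unfolding cube_def by auto
  note ip = init_props[OF n2 y]
  have R0: "R0 \<ge> 1"
    using rate_eq[of n "sfl_init y"] ordd_mono[OF ip(2), of 1 n] n2 unfolding R0_def by auto
  have Bpos: "emeasure (PiM {1..<n} (\<lambda>_. lborel)) (B \<inter> cube) > 0"
  proof -
    have "emeasure (sfl_nu n lam) B = emeasure (PiM {1..<n} (\<lambda>_. lborel)) (cube \<inter> B) / emeasure (PiM {1..<n} (\<lambda>_. lborel)) cube"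
      unfolding sfl_nu_def cube_def[symmetric]
      by (rule emeasure_uniform_measure) (use cs Bs' sl in auto)
    then show ?thesis using Bnu by (auto simp: Int_commute zero_less_iff_neq_zero)
  qed
  have Jpos: "emeasure \<theta> {lam .. lam * (1 + 1 / (real n - 1))} > 0"
    using theta_lam finite_measure.emeasure_eq_measure[OF prob_space.finite_measure[OF theta_prob]] by simp
  show "sfl_occupation \<theta> n y B > 0"
    by (rule occ_pos[of n \<theta> lam "B \<inter> cube" R0 "R0 + 2 * lam * (real n - 1)" y B])
       (use n2 theta_prob theta_sets lam_pos Bcs Bcc R0 y R0_def Bpos Jpos in auto)
qed


end
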